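(* Under the setting where $\widehat E_\varGamma\subseteq E_\varGamma$ is obtained by including each edge independently with probability $p\in(0,1]$ and $\widehat C_M=\frac{1}{pl}\sum_{e\in\widehat E_\varGamma}\eta(e)$, for every $\varepsilon>0$ (and assuming $C_M>0$), $$\Pr\big[|\widehat C_M-C_M|\ge\varepsilon C_M\big]\le\frac{1-p}{p\varepsilon^2}.$$
   Context: A temporal graph $\varGamma=(V_\varGamma,E_\varGamma)$ consists of a finite vertex set $V_\varGamma$ and a finite sequence $E_\varGamma$ of $m$ temporal edges $e=(u,v,t)$ with $u,v\in V_\varGamma$ and timestamp $t\in\mathbb{R}^+$; timestamps are pairwise distinct. A temporal motif $M$ is an ordered sequence of $l$ directed edges $\langle e'_1=(u'_1,v'_1),\dots,e'_l=(u'_l,v'_l)\rangle$ on a vertex set $V_M$ of $k$ vertices, whose underlying graph is connected. Fix $\delta\ge0$. A sequence $S=\langle (w_1,x_1,t_1),\dots,(w_l,x_l,t_l)\rangle$ of $l$ edges of $E_\varGamma$ with $t_1<\dots<t_l$ is a $\delta$-instance of $M$ if there is a bijection $f$ from the vertices of $S$ to $V_M$ with $f(w_i)=u'_i$ and $f(x_i)=v'_i$ for all $i$, and $t_l-t_1\le\delta$. $C_M$ denotes the number of $\delta$-instances of $M$ in $\varGamma$. For $e\in E_\varGamma$, $\eta(e)$ is the number of $\delta$-instances of $M$ containing $e$. *)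

theory Defs
  imports "HOL-Probability.Probability"
begin

text \<open>A temporal edge (u, v, t): source, target, timestamp.
  The edge sequence E of a temporal graph is a list; edges are referred to by
  their position (index) in that list.\<close>

type_synonym 'v tedge = "'v \<times> 'v \<times> real"

definition src :: "'v tedge \<Rightarrow> 'v" where "src e = fst e"
definition dst :: "'v tedge \<Rightarrow> 'v" where "dst e = fst (snd e)"
definition ts  :: "'v tedge \<Rightarrow> real" where "ts e = snd (snd e)"

definition temporal_graph :: "'v set \<Rightarrow> 'v tedge list \<Rightarrow> bool" where
  "temporal_graph V E \<longleftrightarrow> finite V \<and>
     (\<forall>e\<in>set E. src e \<in> V \<and> dst e \<in> V \<and> ts e > 0) \<and> distinct (map ts E)"

definition motif_vertices :: "('w \<times> 'w) list \<Rightarrow> 'w set" where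
  "motif_vertices M = fst ` set M \<union> snd ` set M"

definition temporal_motif :: "('w \<times> 'w) list \<Rightarrow> bool" where
  "temporal_motif M \<longleftrightarrow> M \<noteq> [] \<and>
     (\<forall>a\<in>motif_vertices M. \<forall>b\<in>motif_vertices M. (a, b) \<in> (set M \<union> (set M)\<inverse>)\<^sup>*)"

definition inst_vertices :: "'v tedge list \<Rightarrow> nat list \<Rightarrow> 'v set" where
  "inst_vertices E S = (\<lambda>i. src (E ! i)) ` set S \<union> (\<lambda>i. dst (E ! i)) ` set S"

definition is_delta_instance ::
  "'v tedge list \<Rightarrow> ('w \<times> 'w) list \<Rightarrow> real \<Rightarrow> nat list \<Rightarrow> bool" where
  "is_delta_instance E M \<delta> S \<longleftrightarrow>
     length S = length M \<and> (\<forall>i\<in>set S. i < length E) \<and>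
     sorted_wrt (\<lambda>i j. ts (E ! i) < ts (E ! j)) S \<and>
     (\<exists>f :: 'v \<Rightarrow> 'w. bij_betw f (inst_vertices E S) (motif_vertices M) \<and>
        (\<forall>k<length M. f (src (E ! (S ! k))) = fst (M ! k) \<and> f (dst (E ! (S ! k))) = snd (M ! k))) \<and>
     ts (E ! last S) - ts (E ! hd S) \<le> \<delta>"

definition delta_instances :: "'v tedge list \<Rightarrow> ('w \<times> 'w) list \<Rightarrow> real \<Rightarrow> nat list set" where
  "delta_instances E M \<delta> = {S. is_delta_instance E M \<delta> S}"

definition motif_count :: "'v tedge list \<Rightarrow> ('w \<times> 'w) list \<Rightarrow> real \<Rightarrow> nat" where
  "motif_count E M \<delta> = card (delta_instances E M \<delta>)"

definition eta :: "'v tedge list \<Rightarrow> ('w \<times> 'w) list \<Rightarrow> real \<Rightarrow> nat \<Rightarrow> nat" where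
  "eta E M \<delta> i = card {S \<in> delta_instances E M \<delta>. i \<in> set S}"

text \<open>Independent edge sampling: edge i is kept iff \<omega> i.\<close>
definition edge_sample :: "nat \<Rightarrow> real \<Rightarrow> (nat \<Rightarrow> bool) pmf" where
  "edge_sample m p = Pi_pmf {..<m} False (\<lambda>_. bernoulli_pmf p)"

definition estimator ::
  "'v tedge list \<Rightarrow> ('w \<times> 'w) list \<Rightarrow> real \<Rightarrow> real \<Rightarrow> (nat \<Rightarrow> bool) \<Rightarrow> real" where
  "estimator E M \<delta> p \<omega> =
     (1 / (p * real (length M))) * (\<Sum>i\<in>{i. i < length E \<and> \<omega> i}. real (eta E M \<delta> i))"

end

theory Submission
  imports Defs
begin

lemma fin_Q: "finite (set_pmf (edge_sample m p))"
  unfolding edge_sample_def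
  by (rule finite_subset[OF set_Pi_pmf_subset']) auto

lemma integ_Q: "integrable (measure_pmf (edge_sample m p)) (f :: _ \<Rightarrow> real)"
  by (rule integrable_measure_pmf_finite[OF fin_Q])

lemma exp_prod:
  assumes "S \<subseteq> {..<m}" "0 \<le> p" "p \<le> 1"
  shows "measure_pmf.expectation (edge_sample m p) (\<lambda>\<omega>. \<Prod>x\<in>S. of_bool (\<omega> x) :: real) = p ^ card S"
proof -
  have fS: "finite S" using assms(1) finite_subset by blast
  have eq: "(\<lambda>\<omega>. \<Prod>x\<in>S. of_bool (\<omega> x) :: real) =
        (\<lambda>\<omega>. \<Prod>x\<in>{..<m}. (\<lambda>x b. if x \<in> S then of_bool b else 1) x (\<omega> x))"
  proof
    fix \<omega> :: "nat \<Rightarrow> bool"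
    have "(\<Prod>x\<in>{..<m}. (if x \<in> S then of_bool (\<omega> x) else 1 :: real)) = (\<Prod>x\<in>{..<m} \<inter> S. of_bool (\<omega> x))"
      by (simp add: prod.If_cases)
    also have "{..<m} \<inter> S = S" using assms(1) by blast
    finally show "(\<Prod>x\<in>S. of_bool (\<omega> x) :: real) = (\<Prod>x\<in>{..<m}. (\<lambda>x b. if x \<in> S then of_bool b else 1) x (\<omega> x))"
      by simp
  qed
  have "measure_pmf.expectation (edge_sample m p) (\<lambda>\<omega>. \<Prod>x\<in>S. of_bool (\<omega> x) :: real) =
     (\<Prod>x\<in>{..<m}. measure_pmf.expectation (bernoulli_pmf p) (\<lambda>b. (if x \<in> S then of_bool b else 1 :: real)))"
    unfolding eq edge_sample_def
    by (rule expectation_prod_Pi_pmf) (auto intro!: integrable_measure_pmf_finite)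
  also have "(\<Prod>x\<in>{..<m}. measure_pmf.expectation (bernoulli_pmf p) (\<lambda>b. (if x \<in> S then of_bool b else 1 :: real))) = (\<Prod>x\<in>{..<m}. if x \<in> S then p else 1)"
    using assms by (intro prod.cong) auto
  also have "\<dots> = (\<Prod>x\<in>{..<m} \<inter> S. p)" by (simp add: prod.If_cases)
  also have "{..<m} \<inter> S = S" using assms(1) by blast
  finally show ?thesis by simp
qed

lemma sorted_wrt_irrefl_distinct:
  "sorted_wrt R xs \<Longrightarrow> (\<And>x. \<not> R x x) \<Longrightarrow> distinct xs"
  by (induction xs) auto

lemma sumsq_le: "(\<And>i. i \<in> A \<Longrightarrow> (0::real) \<le> x i) \<Longrightarrow> (\<Sum>i\<in>A. x i ^ 2) \<le> (\<Sum>i\<in>A. x i) ^ 2"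
proof (cases "finite A")
  case True
  assume nn: "\<And>i. i \<in> A \<Longrightarrow> (0::real) \<le> x i"
  have "(\<Sum>i\<in>A. x i ^ 2) \<le> (\<Sum>i\<in>A. x i * (\<Sum>j\<in>A. x j))"
    using True nn by (intro sum_mono) (auto simp: power2_eq_square intro!: mult_left_mono member_le_sum)
  also have "\<dots> = (\<Sum>i\<in>A. x i) ^ 2" by (simp add: power2_eq_square sum_distrib_right)
  finally show ?thesis .
qed simp

lemma sum_card_count:
  fixes m :: nat
  assumes fD: "finite D" and D: "\<And>S. S \<in> D \<Longrightarrow> distinct S \<and> set S \<subseteq> {..<m} \<and> length S = l"
  shows "(\<Sum>i<m. card {S \<in> D. i \<in> set S}) = l * card D"
proof -
  have "(\<Sum>i<m. card {S \<in> D. i \<in> set S}) = (\<Sum>i<m. \<Sum>S\<in>D. if i \<in> set S then 1 else (0::nat))"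
    using fD by (intro sum.cong refl) (simp add: sum.If_cases Collect_conj_eq Int_commute)
  also have "\<dots> = (\<Sum>S\<in>D. \<Sum>i<m. if i \<in> set S then 1 else (0::nat))"
    by (rule sum.swap)
  also have "\<dots> = (\<Sum>S\<in>D. l)"
  proof (intro sum.cong refl)
    fix S assume "S \<in> D"
    with D have d: "distinct S" "set S \<subseteq> {..<m}" "length S = l" by auto
    have "(\<Sum>i<m. if i \<in> set S then 1 else (0::nat)) = card ({..<m} \<inter> set S)"
      by (subst sum.If_cases) simp_all
    also have "{..<m} \<inter> set S = set S" using d by blast
    also have "card (set S) = l" using d distinct_card by metis
    finally show "(\<Sum>i<m. if i \<in> set S then 1 else (0::nat)) = l" .
  qed
  also have "\<dots> = l * card D" by simp
  finally show ?thesis .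
qed

lemma exp_b:
  assumes "i < m" "j < m" "0 \<le> p" "p \<le> 1"
  shows "measure_pmf.expectation (edge_sample m p)
     (\<lambda>\<omega>. (of_bool (\<omega> i) - p) * (of_bool (\<omega> j) - p) :: real) = (if i = j then p - p\<^sup>2 else 0)"
proof -
  have e1: "measure_pmf.expectation (edge_sample m p) (\<lambda>\<omega>. of_bool (\<omega> k) :: real) = p" if "k < m" for k
    using exp_prod[of "{k}" m p] that assms by simp
  have e2: "measure_pmf.expectation (edge_sample m p) (\<lambda>\<omega>. of_bool (\<omega> i) * of_bool (\<omega> j) :: real) = (if i = j then p else p\<^sup>2)"
  proof (cases "i = j")
    case True
    have "(\<lambda>\<omega>. of_bool (\<omega> i) * of_bool (\<omega> j) :: real) = (\<lambda>\<omega>. of_bool (\<omega> i))"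
      using True by auto
    thus ?thesis using e1[of i] assms True by simp
  next
    case False
    thus ?thesis using exp_prod[of "{i,j}" m p] assms by (simp add: power2_eq_square)
  qed
  have "(\<lambda>\<omega>. (of_bool (\<omega> i) - p) * (of_bool (\<omega> j) - p) :: real) =
    (\<lambda>\<omega>. of_bool (\<omega> i) * of_bool (\<omega> j) - p * of_bool (\<omega> i) - p * of_bool (\<omega> j) + p * p)"
    by (auto simp: algebra_simps)
  hence "measure_pmf.expectation (edge_sample m p)
     (\<lambda>\<omega>. (of_bool (\<omega> i) - p) * (of_bool (\<omega> j) - p) :: real) =
     measure_pmf.expectation (edge_sample m p) (\<lambda>\<omega>. of_bool (\<omega> i) * of_bool (\<omega> j) :: real)
     - p * measure_pmf.expectation (edge_sample m p) (\<lambda>\<omega>. of_bool (\<omega> i) :: real)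
     - p * measure_pmf.expectation (edge_sample m p) (\<lambda>\<omega>. of_bool (\<omega> j) :: real) + p * p"
    by (simp add: integ_Q)
  also have "\<dots> = (if i = j then p - p\<^sup>2 else 0)"
    using e1 e2 assms by (simp add: power2_eq_square)
  finally show ?thesis .
qed

theorem theorem3:
  fixes V :: "'v set" and E :: "'v tedge list" and M :: "('w \<times> 'w) list"
    and \<delta> p \<epsilon> :: real
  assumes "temporal_graph V E"
    and "temporal_motif M"
    and "\<delta> \<ge> 0"
    and "0 < p" and "p \<le> 1"
    and "\<epsilon> > 0"
    and "motif_count E M \<delta> > 0"
  shows "measure_pmf.prob (edge_sample (length E) p)
           {\<omega>. \<bar>estimator E M \<delta> p \<omega> - real (motif_count E M \<delta>)\<bar>
                 \<ge> \<epsilon> * real (motif_count E M \<delta>)}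
         \<le> (1 - p) / (p * \<epsilon>\<^sup>2)"
proof -
  define m where "m = length E"
  define l where "l = length M"
  define D where "D = delta_instances E M \<delta>"
  define C where "C = motif_count E M \<delta>"
  define Q where "Q = edge_sample m p"
  define h where "h i = real (eta E M \<delta> i)" for i
  have l0: "l > 0" using assms(2) unfolding l_def temporal_motif_def by simp
  have Dprops: "distinct S \<and> set S \<subseteq> {..<m} \<and> length S = l" if "S \<in> D" for S
    using that unfolding D_def delta_instances_def is_delta_instance_def m_def l_def
    by (auto intro: sorted_wrt_irrefl_distinct)
  have fD: "finite D"
    by (rule finite_subset[of _ "{xs. set xs \<subseteq> {..<m} \<and> length xs = l}"])
       (use Dprops in \<open>auto intro: finite_lists_length_eq\<close>)
  have C_eq: "C = card D" unfolding C_def D_def motif_count_def by simp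
  have C0: "real C > 0" using assms(7) C_def by simp
  have sumh: "(\<Sum>i<m. h i) = real l * real C"
  proof -
    have "(\<Sum>i<m. eta E M \<delta> i) = l * card D"
      unfolding eta_def D_def[symmetric] by (rule sum_card_count[OF fD Dprops])
    hence "real (\<Sum>i<m. eta E M \<delta> i) = real (l * C)" using C_eq by simp
    thus ?thesis unfolding h_def by simp
  qed
  have h0: "h i \<ge> 0" for i unfolding h_def by simp
  define Y where "Y \<omega> = (\<Sum>i<m. h i * (of_bool (\<omega> i) - p))" for \<omega> :: "nat \<Rightarrow> bool"
  have est: "estimator E M \<delta> p \<omega> - real C = Y \<omega> / (p * real l)" for \<omega>
  proof -
    have "(\<Sum>i\<in>{i. i < length E \<and> \<omega> i}. real (eta E M \<delta> i)) = (\<Sum>i<m. h i * of_bool (\<omega> i))"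
    proof -
      have "{i. i < length E \<and> \<omega> i} = {i \<in> {..<m}. \<omega> i}" unfolding m_def by auto
      hence "(\<Sum>i\<in>{i. i < length E \<and> \<omega> i}. real (eta E M \<delta> i)) = (\<Sum>i<m. if \<omega> i then h i else 0)"
        unfolding h_def by (simp only: sum.inter_filter[OF finite_lessThan])
      moreover have "(\<Sum>i<m. if \<omega> i then h i else 0) = (\<Sum>i<m. h i * of_bool (\<omega> i))"
        by (intro sum.cong) auto
      ultimately show ?thesis by simp
    qed
    moreover have "Y \<omega> = (\<Sum>i<m. h i * of_bool (\<omega> i)) - p * (\<Sum>i<m. h i)"
      unfolding Y_def by (simp add: algebra_simps sum_subtractf sum_distrib_left)
    ultimately show ?thesis
      using assms(4) l0 sumh unfolding estimator_def l_def
      by (simp add: field_simps)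
  qed
  have EY2: "measure_pmf.expectation Q (\<lambda>\<omega>. (Y \<omega>)\<^sup>2) = (p - p\<^sup>2) * (\<Sum>i<m. (h i)\<^sup>2)"
  proof -
    have "(\<lambda>\<omega>. (Y \<omega>)\<^sup>2) = (\<lambda>\<omega>. \<Sum>i<m. \<Sum>j<m. h i * h j * ((of_bool (\<omega> i) - p) * (of_bool (\<omega> j) - p)))"
      unfolding Y_def by (auto simp: power2_eq_square sum_product algebra_simps)
    hence "measure_pmf.expectation Q (\<lambda>\<omega>. (Y \<omega>)\<^sup>2) =
       (\<Sum>i<m. \<Sum>j<m. h i * h j * measure_pmf.expectation Q (\<lambda>\<omega>. (of_bool (\<omega> i) - p) * (of_bool (\<omega> j) - p)))"
      unfolding Q_def by (simp add: integ_Q)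
    also have "\<dots> = (\<Sum>i<m. \<Sum>j<m. h i * h j * (if i = j then p - p\<^sup>2 else 0))"
      unfolding Q_def using assms(4,5) by (intro sum.cong refl) (simp add: exp_b)
    also have "\<dots> = (\<Sum>i<m. (p - p\<^sup>2) * (h i)\<^sup>2)"
      by (intro sum.cong refl) (simp add: if_distrib power2_eq_square cong: if_cong)
    also have "\<dots> = (p - p\<^sup>2) * (\<Sum>i<m. (h i)\<^sup>2)" by (simp add: sum_distrib_left)
    finally show ?thesis .
  qed
  have a0: "\<epsilon> * real C > 0" using assms(6) C0 by simp
  have "measure_pmf.prob Q {\<omega>. \<bar>estimator E M \<delta> p \<omega> - real C\<bar> \<ge> \<epsilon> * real C}
      \<le> measure_pmf.expectation Q (\<lambda>\<omega>. (estimator E M \<delta> p \<omega> - real C)\<^sup>2) / (\<epsilon> * real C)\<^sup>2"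
    using measure_pmf.second_moment_method[where M=Q and f="\<lambda>\<omega>. estimator E M \<delta> p \<omega> - real C" and a="\<epsilon> * real C"] a0
    unfolding Q_def by (simp add: integ_Q)
  also have "measure_pmf.expectation Q (\<lambda>\<omega>. (estimator E M \<delta> p \<omega> - real C)\<^sup>2)
     = measure_pmf.expectation Q (\<lambda>\<omega>. (Y \<omega>)\<^sup>2) / (p * real l)\<^sup>2"
    by (simp add: est power_divide)
  also have "\<dots> \<le> (p - p\<^sup>2) * (real l * real C)\<^sup>2 / (p * real l)\<^sup>2"
  proof -
    have "(\<Sum>i<m. (h i)\<^sup>2) \<le> (\<Sum>i<m. h i)\<^sup>2" by (rule sumsq_le) (simp add: h0)
    moreover have "p - p\<^sup>2 \<ge> 0" using assms(4,5) by (simp add: power2_eq_square)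
    ultimately show ?thesis unfolding EY2 sumh
      by (intro divide_right_mono mult_left_mono) auto
  qed
  also have "\<dots> = (1 - p) / p * (real C)\<^sup>2"
    using assms(4) l0 by (simp add: field_simps power2_eq_square)
  finally have "measure_pmf.prob Q {\<omega>. \<bar>estimator E M \<delta> p \<omega> - real C\<bar> \<ge> \<epsilon> * real C}
      \<le> (1 - p) / p * (real C)\<^sup>2 / (\<epsilon> * real C)\<^sup>2"
    using a0 by (simp add: divide_right_mono)
  also have "\<dots> = (1 - p) / (p * \<epsilon>\<^sup>2)"
    using C0 assms(4,6) by (simp add: field_simps power2_eq_square)
  finally show ?thesis unfolding Q_def C_def m_def .
qed

end
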